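(* Let $n\ge 5$ and let $\sigma$ be a maximal simplex of $\Delta_n$ that covers all places, and suppose $|N(w)\cap\sigma|\ge 2$ for all $w\in\sigma$. If there exists $v\in\sigma$ with $|N(v)\cap\sigma|\ge 3$, then $N(v)\subseteq\sigma$.
   Context: $\mathbb{I}_n$ is the $n$-dimensional hypercube graph on vertex set $\{0,1\}^n$ (adjacent iff differing in exactly one coordinate), with Hamming distance $d(v,w)=\#\{i: v(i)\ne w(i)\}$, $v(i)$ the $i$-th coordinate. $\Delta_n=\mathcal{VR}(\mathbb{I}_n;3)$ is the simplicial complex whose simplices are the subsets $\sigma\subseteq\{0,1\}^n$ with $d(x,y)\le 3$ for all $x,y\in\sigma$. A simplex $\sigma$ covers all places if for each $i\in[n]=\{1,\dots,n\}$ there are $v,w\in\sigma$ with $v(i)=1$ and $w(i)=0$. $N(v)$ denotes the set of the $n$ vertices adjacent to $v$ in $\mathbb{I}_n$. *)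

theory Defs
  imports Main
begin

text \<open>A vertex of the hypercube I_n, an element of {0,1}^n, is represented by the set of
coordinates in [n] = {1..n} at which it equals 1.  So the vertex set is Pow {1..n}.\<close>

definition cube_vertices :: "nat \<Rightarrow> nat set set" where
  "cube_vertices n = Pow {1..n}"

definition hdist :: "nat set \<Rightarrow> nat set \<Rightarrow> nat" where
  "hdist v w = card ((v - w) \<union> (w - v))"

text \<open>Simplices of Delta_n = VR(I_n; 3): nonempty (finite) sets of vertices with pairwise
distance at most 3.\<close>
definition is_simplex :: "nat \<Rightarrow> nat set set \<Rightarrow> bool" where
  "is_simplex n \<sigma> \<longleftrightarrow> \<sigma> \<noteq> {} \<and> \<sigma> \<subseteq> cube_vertices n \<and>
     (\<forall>x\<in>\<sigma>. \<forall>y\<in>\<sigma>. hdist x y \<le> 3)"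

definition is_maximal_simplex :: "nat \<Rightarrow> nat set set \<Rightarrow> bool" where
  "is_maximal_simplex n \<sigma> \<longleftrightarrow> is_simplex n \<sigma> \<and>
     (\<forall>\<tau>. is_simplex n \<tau> \<and> \<sigma> \<subseteq> \<tau> \<longrightarrow> \<tau> = \<sigma>)"

definition covers_all_places :: "nat \<Rightarrow> nat set set \<Rightarrow> bool" where
  "covers_all_places n \<sigma> \<longleftrightarrow>
     (\<forall>i\<in>{1..n}. \<exists>v\<in>\<sigma>. \<exists>w\<in>\<sigma>. i \<in> v \<and> i \<notin> w)"

definition nbhd :: "nat \<Rightarrow> nat set \<Rightarrow> nat set set" where
  "nbhd n v = {w \<in> cube_vertices n. hdist v w = 1}"

end

theory Submission
  imports Defs
begin

definition sdf :: "nat set \<Rightarrow> nat set \<Rightarrow> nat set" where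
  "sdf a b = (a - b) \<union> (b - a)"

lemma hdist_sdf: "hdist a b = card (sdf a b)"
  by (simp add: hdist_def sdf_def)

lemma sdf_cancel: "sdf (sdf v a) (sdf v b) = sdf a b"
  by (auto simp: sdf_def)

lemma sdf_inv: "sdf v (sdf v a) = a"
  by (auto simp: sdf_def)

lemma sdf_comm: "sdf a b = sdf b a"
  by (auto simp: sdf_def)

lemma sdf_fin: "finite a \<Longrightarrow> finite b \<Longrightarrow> finite (sdf a b)"
  by (simp add: sdf_def)

lemma lemA:
  assumes "finite Z" "card Z \<ge> 3" "card (sdf Z {c}) \<le> 3" shows "c \<in> Z"
proof (rule ccontr)
  assume "c \<notin> Z"
  then have "sdf Z {c} = insert c Z" by (auto simp: sdf_def)
  with assms \<open>c \<notin> Z\<close> show False by simp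
qed

lemma lemB:
  assumes "finite Z" "card Z \<le> 2" "i \<in> Z" "i \<notin> T" "card T = 3" "card (sdf Z T) \<le> 3"
  shows "\<exists>p\<in>T. Z = {i,p}"
proof -
  have fT: "finite T" using assms(5) by (metis card.infinite zero_neq_numeral)
  have sub: "insert i (T - Z) \<subseteq> sdf Z T" using assms(3,4) by (auto simp: sdf_def)
  have "card (insert i (T - Z)) \<le> 3"
    using card_mono[OF sdf_fin[OF assms(1) fT] sub] assms(6) by simp
  then have "card (T - Z) \<le> 2" using fT assms(4) by simp
  have "T \<inter> Z \<noteq> {}"
  proof
    assume "T \<inter> Z = {}"
    then have "T - Z = T" by blast
    then show False using \<open>card (T - Z) \<le> 2\<close> assms(5) by simp
  qed
  then obtain p where p: "p \<in> T" "p \<in> Z" by blast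
  have "i \<noteq> p" using p assms(4) by auto
  have "{i,p} = Z"
    by (rule card_seteq) (use assms(1,2,3) p \<open>i \<noteq> p\<close> in auto)
  then show ?thesis using p by auto
qed


lemma three_elems:
  assumes "3 \<le> card A"
  obtains a b c where "a \<in> A" "b \<in> A" "c \<in> A" "a \<noteq> b" "a \<noteq> c" "b \<noteq> c"
proof -
  have h: "Suc (Suc (Suc 0)) \<le> card A" using assms by simp
  obtain a B where B: "A = insert a B \<and> a \<notin> B \<and> Suc (Suc 0) \<le> card B \<and> finite B"
    using card_le_Suc_iff[THEN iffD1, OF h] by (elim exE) assumption
  obtain b C where C: "B = insert b C \<and> b \<notin> C \<and> Suc 0 \<le> card C \<and> finite C"
    using card_le_Suc_iff[THEN iffD1, OF B[THEN conjunct2, THEN conjunct2, THEN conjunct1]] by (elim exE) assumption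
  obtain c D where D: "C = insert c D \<and> c \<notin> D \<and> 0 \<le> card D \<and> finite D"
    using card_le_Suc_iff[THEN iffD1, OF C[THEN conjunct2, THEN conjunct2, THEN conjunct1]] by (elim exE) assumption
  have "a \<in> A" "b \<in> A" "c \<in> A" "a \<noteq> b" "a \<noteq> c" "b \<noteq> c"
    using B C D by auto
  then show ?thesis by (rule that)
qed

theorem mainTheorem10:
  fixes n :: nat and \<sigma> :: "nat set set" and v :: "nat set"
  assumes "n \<ge> 5"
    and "is_maximal_simplex n \<sigma>"
    and "covers_all_places n \<sigma>"
    and "\<forall>w\<in>\<sigma>. card (nbhd n w \<inter> \<sigma>) \<ge> 2"
    and "v \<in> \<sigma>"
    and "card (nbhd n v \<inter> \<sigma>) \<ge> 3"
  shows "nbhd n v \<subseteq> \<sigma>"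
proof
  have smp: "is_simplex n \<sigma>" and maxl: "\<And>\<tau>. is_simplex n \<tau> \<Longrightarrow> \<sigma> \<subseteq> \<tau> \<Longrightarrow> \<tau> = \<sigma>"
    using assms(2) by (auto simp: is_maximal_simplex_def)
  have sub: "\<And>z. z \<in> \<sigma> \<Longrightarrow> z \<subseteq> {1..n}"
    using smp by (auto simp: is_simplex_def cube_vertices_def)
  have fin: "\<And>z. z \<in> \<sigma> \<Longrightarrow> finite z" using sub finite_subset by blast
  have d3: "\<And>a b. a \<in> \<sigma> \<Longrightarrow> b \<in> \<sigma> \<Longrightarrow> card (sdf a b) \<le> 3"
    using smp by (auto simp: is_simplex_def hdist_sdf)
  have cc: "\<And>a b. card (sdf (sdf v a) (sdf v b)) = card (sdf a b)" by (simp add: sdf_cancel)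
  have nb1: "\<And>a. a \<in> nbhd n v \<Longrightarrow> \<exists>c. sdf v a = {c}"
    by (auto simp: nbhd_def hdist_sdf card_1_singleton_iff)
  obtain a1 a2 a3 where a: "a1 \<in> nbhd n v \<inter> \<sigma>" "a2 \<in> nbhd n v \<inter> \<sigma>" "a3 \<in> nbhd n v \<inter> \<sigma>"
    "a1 \<noteq> a2" "a1 \<noteq> a3" "a2 \<noteq> a3"
    using three_elems[OF assms(6)] by metis
  obtain c1 where c1: "sdf v a1 = {c1}" using nb1 a(1) by blast
  obtain c2 where c2: "sdf v a2 = {c2}" using nb1 a(2) by blast
  obtain c3 where c3: "sdf v a3 = {c3}" using nb1 a(3) by blast
  have cd: "c1 \<noteq> c2" "c1 \<noteq> c3" "c2 \<noteq> c3"
    using a(4-6) c1 c2 c3 sdf_inv by metis+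
  have cz: "\<And>z. z \<in> \<sigma> \<Longrightarrow> card (sdf (sdf v z) {c1}) \<le> 3 \<and> card (sdf (sdf v z) {c2}) \<le> 3
      \<and> card (sdf (sdf v z) {c3}) \<le> 3"
    using d3 a c1 c2 c3 cc by (metis IntD2)
  have cv: "\<And>z. z \<in> \<sigma> \<Longrightarrow> card (sdf v z) \<le> 3" using d3 assms(5) by blast
  have finv: "\<And>z. z \<in> \<sigma> \<Longrightarrow> finite (sdf v z)" using fin assms(5) sdf_fin by blast
  fix u assume u: "u \<in> nbhd n v"
  obtain i where i: "sdf v u = {i}" using nb1 u by blast
  have uc: "u \<subseteq> {1..n}" using u by (auto simp: nbhd_def cube_vertices_def)
  have "i \<in> sdf v u" using i by simp
  then have "i \<in> u \<or> i \<in> v" by (auto simp: sdf_def)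
  then have iin: "i \<in> {1..n}" using uc sub[OF assms(5)] by blast
  have ux: "card (sdf u x) \<le> 3" if x: "x \<in> \<sigma>" for x
  proof (rule ccontr)
    assume bad: "\<not> card (sdf u x) \<le> 3"
    define T where "T = sdf v x"
    have fT: "finite T" using finv x T_def by blast
    have e: "card (sdf {i} T) = card (sdf u x)" using cc[of u x] i T_def by simp
    have iT: "i \<notin> T"
    proof
      assume "i \<in> T"
      then have "sdf {i} T = T - {i}" by (auto simp: sdf_def)
      then have "card (sdf {i} T) \<le> card T" using fT by (simp add: card_mono)
      then show False using e bad cv[OF x] T_def by simp
    qed
    then have "sdf {i} T = insert i T" by (auto simp: sdf_def)
    then have "card (sdf {i} T) = Suc (card T)" using fT iT by simp
    then have cT: "card T = 3" using e bad cv[OF x] T_def by simp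
    have HA: "sdf v z = T" if z: "z \<in> \<sigma>" "card (sdf v z) \<ge> 3" for z
    proof -
      have "c1 \<in> sdf v z" "c2 \<in> sdf v z" "c3 \<in> sdf v z"
        using lemA[OF finv[OF z(1)] z(2)] cz[OF z(1)] by auto
      moreover have "c1 \<in> T" "c2 \<in> T" "c3 \<in> T"
        using lemA[OF fT] cz[OF x] cT T_def by auto
      moreover have "T = {c1,c2,c3}"
        by (rule card_seteq[symmetric]) (use fT cT cd calculation in auto)
      ultimately have Ts: "T \<subseteq> sdf v z" by auto
      have "card (sdf v z) \<le> card T" using cT cv[OF z(1)] by simp
      then have "T = sdf v z" by (rule card_seteq[OF finv[OF z(1)] Ts])
      then show ?thesis by simp
    qed
    have HB: "\<exists>p\<in>T. sdf v z = {i,p}" if z: "z \<in> \<sigma>" "i \<in> sdf v z" for z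
    proof (rule lemB[OF finv[OF z(1)] _ z(2) iT cT])
      show "card (sdf v z) \<le> 2"
        using HA[OF z(1)] z(2) iT cv[OF z(1)] by (metis not_less_eq_eq numeral_2_eq_2 numeral_3_eq_3 le_antisym)
      show "card (sdf (sdf v z) T) \<le> 3" using cc d3 z(1) x T_def by metis
    qed
    obtain y where y: "y \<in> \<sigma>" "i \<in> sdf v y"
    proof -
      have "\<exists>y1\<in>\<sigma>. \<exists>y2\<in>\<sigma>. i \<in> y1 \<and> i \<notin> y2"
        using assms(3) iin unfolding covers_all_places_def by (rule bspec)
      then obtain y1 y2 where "y1 \<in> \<sigma>" "y2 \<in> \<sigma>" "i \<in> y1" "i \<notin> y2"
        by blast
      note yy = this
      show ?thesis
      proof (cases "i \<in> v")
        case True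
        then have "i \<in> sdf v y2" using yy by (simp add: sdf_def)
        then show ?thesis using that yy by blast
      next
        case False
        then have "i \<in> sdf v y1" using yy by (simp add: sdf_def)
        then show ?thesis using that yy by blast
      qed
    qed
    obtain p where p: "p \<in> T" "sdf v y = {i,p}" using HB[OF y] by blast
    have ip: "i \<noteq> p" using p iT by auto
    have "nbhd n y \<inter> \<sigma> \<subseteq> {sdf v {p}}"
    proof
      fix z assume z: "z \<in> nbhd n y \<inter> \<sigma>"
      have c1z: "card (sdf {i,p} (sdf v z)) = 1"
        using z cc[of y z] p(2) by (auto simp: nbhd_def hdist_sdf)
      show "z \<in> {sdf v {p}}"
      proof (cases "i \<in> sdf v z")
        case True
        then obtain q where q: "q \<in> T" "sdf v z = {i,q}" using HB z by blast
        have "i \<noteq> q" using q iT by auto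
        then have "sdf {i,p} {i,q} = (if p = q then {} else {p,q})" using ip
          by (auto simp: sdf_def)
        then show ?thesis using c1z q by (simp split: if_splits)
      next
        case False
        then have "i \<in> sdf {i,p} (sdf v z)" by (auto simp: sdf_def)
        then have "sdf {i,p} (sdf v z) = {i}" using c1z
          by (metis card_1_singletonE singletonD)
        then have "sdf v z = sdf {i,p} {i}" by (metis sdf_inv)
        also have "\<dots> = {p}" using ip by (auto simp: sdf_def)
        finally show ?thesis by (metis sdf_inv singletonI)
      qed
    qed
    then have "card (nbhd n y \<inter> \<sigma>) \<le> 1" by (metis card_mono finite.emptyI finite.insertI is_singletonI is_singleton_altdef)
    then show False using assms(4) y(1) by fastforce
  qed
  have ucv: "u \<in> cube_vertices n" using u by (simp add: nbhd_def)
  have pw: "\<forall>a\<in>insert u \<sigma>. \<forall>b\<in>insert u \<sigma>. hdist a b \<le> 3"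
  proof (intro ballI)
    fix a b assume ab: "a \<in> insert u \<sigma>" "b \<in> insert u \<sigma>"
    have uu: "sdf u u = {}" by (simp add: sdf_def)
    show "hdist a b \<le> 3"
      unfolding hdist_sdf
    proof (cases "a = u")
      case True
      then show "card (sdf a b) \<le> 3"
        using ab(2) ux uu by (cases "b = u") auto
    next
      case False
      then have a\<sigma>: "a \<in> \<sigma>" using ab(1) by simp
      show "card (sdf a b) \<le> 3"
      proof (cases "b = u")
        case True
        then show ?thesis using ux[OF a\<sigma>] sdf_comm[of a u] by simp
      next
        case False
        then show ?thesis using d3 a\<sigma> ab(2) by simp
      qed
    qed
  qed
  have "is_simplex n (insert u \<sigma>)"
    unfolding is_simplex_def
  proof (intro conjI)
    show "insert u \<sigma> \<noteq> {}" by simp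
    show "insert u \<sigma> \<subseteq> cube_vertices n" using ucv smp by (simp add: is_simplex_def)
  qed (rule pw)
  then have "insert u \<sigma> = \<sigma>" using maxl by blast
  then show "u \<in> \<sigma>" by blast
qed

end
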